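(* Let $a\ge0$ and let $B\subset\mathcal{L}^+_a$ be compact with respect to the topology of uniform convergence on compact subsets of $\mathbb{C}$. If $B$ does not contain the function $f\equiv0$, then $B$ is compact in $\mathcal{A}_a$.
   Context: For $b>0$, $\|f\|_b=\sup_{k\in\mathbb{N}_0}b^{-k}|f^{(k)}(0)|$; $\mathcal{A}_a=\{f\text{ entire}:\|f\|_b<\infty\ \forall b>a\}$ with topology generated by $\{\|\cdot\|_b:b>a\}$. $\mathcal{L}^+$ is the set of entire functions $Cz^le^{\alpha z}\prod_{j\ge1}(1+\beta_jz)$ with $C\in\mathbb{C}$, $l\in\mathbb{N}_0$, $\alpha\ge0$, $\beta_j\ge\beta_{j+1}\ge0$, $\sum_j\beta_j<\infty$; $\mathcal{L}^+_a=\mathcal{L}^+\cap\mathcal{A}_a$. *)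

theory Defs
  imports "HOL-Analysis.Analysis"
begin

definition normb :: "real \<Rightarrow> (complex \<Rightarrow> complex) \<Rightarrow> ereal" where
  "normb b f = (SUP k::nat. ereal (cmod ((deriv ^^ k) f 0) / b ^ k))"

definition A_space :: "real \<Rightarrow> (complex \<Rightarrow> complex) set" where
  "A_space a = {f. f holomorphic_on UNIV \<and> (\<forall>b>a. normb b f < \<infinity>)}"

definition A_topology :: "real \<Rightarrow> (complex \<Rightarrow> complex) topology" where
  "A_topology a = topology_generated_by
     {{g \<in> A_space a. normb b (\<lambda>z. g z - f z) < ereal r} | f b r.
        f \<in> A_space a \<and> b > a \<and> r > 0}"

definition LU_topology :: "(complex \<Rightarrow> complex) topology" where
  "LU_topology = topology_generated_by
     {{g. g holomorphic_on UNIV \<and> (\<forall>z\<in>K. cmod (g z - f z) < r)} | f K r.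
        f holomorphic_on UNIV \<and> compact K \<and> r > 0}"

definition Lplus :: "(complex \<Rightarrow> complex) set" where
  "Lplus = {f. \<exists>(C::complex) (l::nat) (\<alpha>::real) (\<beta>::nat \<Rightarrow> real).
      \<alpha> \<ge> 0 \<and> (\<forall>j. \<beta> j \<ge> 0) \<and> (\<forall>j. \<beta> (Suc j) \<le> \<beta> j) \<and> summable \<beta> \<and>
      (\<forall>z. f z = C * z ^ l * exp (complex_of_real \<alpha> * z) *
                   (\<Prod>j. 1 + complex_of_real (\<beta> j) * z))}"

definition Lplus_a :: "real \<Rightarrow> (complex \<Rightarrow> complex) set" where
  "Lplus_a a = Lplus \<inter> A_space a"

end

theory Submission
  imports Defs "HOL-Complex_Analysis.Complex_Analysis"
begin

lemma lp_prod_real: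
  fixes \<beta> :: "nat \<Rightarrow> real"
  assumes "\<forall>j. \<beta> j \<ge> 0" "summable \<beta>" "s \<ge> 0"
  shows "convergent_prod (\<lambda>j. 1 + \<beta> j * s)" "prodinf (\<lambda>j. 1 + \<beta> j * s) \<ge> 1"
proof -
  have sm: "summable (\<lambda>j. \<bar>\<beta> j * s\<bar>)"
    using assms by (simp add: abs_mult summable_mult2)
  show cp: "convergent_prod (\<lambda>j. 1 + \<beta> j * s)"
  proof (rule summable_imp_convergent_prod_real[OF sm])
    fix k have "\<beta> k * s \<ge> 0" using assms by simp
    thus "\<beta> k * s \<noteq> -1" by linarith
  qed
  show "prodinf (\<lambda>j. 1 + \<beta> j * s) \<ge> 1"
    by (rule prodinf_nonneg[OF convergent_prod_has_prod[OF cp]]) (use assms in auto)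
qed

lemma lp_prod_of_real:
  fixes \<beta> :: "nat \<Rightarrow> real"
  assumes "\<forall>j. \<beta> j \<ge> 0" "summable \<beta>" "s \<ge> 0"
  shows "prodinf (\<lambda>j. 1 + complex_of_real (\<beta> j) * complex_of_real s) = complex_of_real (prodinf (\<lambda>j. 1 + \<beta> j * s))"
proof -
  have "(\<lambda>j. 1 + \<beta> j * s) has_prod prodinf (\<lambda>j. 1 + \<beta> j * s)"
    by (rule convergent_prod_has_prod[OF lp_prod_real(1)[OF assms]])
  hence "(\<lambda>j. complex_of_real (1 + \<beta> j * s)) has_prod complex_of_real (prodinf (\<lambda>j. 1 + \<beta> j * s))"
    by (simp only: has_prod_of_real_iff)
  moreover have "(\<lambda>j. complex_of_real (1 + \<beta> j * s)) = (\<lambda>j. 1 + complex_of_real (\<beta> j) * complex_of_real s)"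
    by auto
  ultimately have "(\<lambda>j. 1 + complex_of_real (\<beta> j) * complex_of_real s) has_prod complex_of_real (prodinf (\<lambda>j. 1 + \<beta> j * s))"
    by simp
  thus ?thesis using has_prod_iff by blast
qed

lemma lp_prod_norm:
  fixes \<beta> :: "nat \<Rightarrow> real"
  assumes "\<forall>j. \<beta> j \<ge> 0" "summable \<beta>"
  shows "cmod (prodinf (\<lambda>j. 1 + complex_of_real (\<beta> j) * z)) \<le> prodinf (\<lambda>j. 1 + \<beta> j * cmod z)"
proof -
  let ?f = "\<lambda>j. 1 + complex_of_real (\<beta> j) * z"
  have "summable (\<lambda>j. norm (?f j - 1))"
    using assms by (simp add: norm_mult summable_mult2)
  hence "abs_convergent_prod ?f" by (rule summable_imp_abs_convergent_prod)
  hence cp: "convergent_prod ?f" by (rule abs_convergent_prod_imp_convergent_prod)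
  have lim: "(\<lambda>n. cmod (\<Prod>i\<le>n. ?f i)) \<longlonglongrightarrow> cmod (prodinf ?f)"
    by (rule tendsto_norm[OF convergent_prod_LIMSEQ[OF cp]])
  have hp: "(\<lambda>j. 1 + \<beta> j * cmod z) has_prod prodinf (\<lambda>j. 1 + \<beta> j * cmod z)"
    by (rule convergent_prod_has_prod[OF lp_prod_real(1)[OF assms norm_ge_zero]])
  have "cmod (\<Prod>i\<le>n. ?f i) \<le> prodinf (\<lambda>j. 1 + \<beta> j * cmod z)" for n
  proof -
    have "cmod (\<Prod>i\<le>n. ?f i) = (\<Prod>i\<le>n. cmod (?f i))" by (simp add: prod_norm)
    also have "\<dots> \<le> (\<Prod>i\<le>n. 1 + \<beta> i * cmod z)"
    proof (rule prod_mono)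
      fix i
      have "cmod (?f i) \<le> 1 + cmod (complex_of_real (\<beta> i) * z)" using norm_triangle_ineq[of 1 "complex_of_real (\<beta> i) * z"] by simp
      also have "\<dots> = 1 + \<beta> i * cmod z" using assms by (simp add: norm_mult)
      finally show "0 \<le> cmod (?f i) \<and> cmod (?f i) \<le> 1 + \<beta> i * cmod z" by simp
    qed
    also have "\<dots> = (\<Prod>i<Suc n. 1 + \<beta> i * cmod z)" by (simp only: lessThan_Suc_atMost)
    also have "\<dots> \<le> prodinf (\<lambda>j. 1 + \<beta> j * cmod z)"
      by (rule prod_le_prodinf[OF hp]) (use assms in \<open>simp_all\<close>)
    finally show ?thesis .
  qed
  thus ?thesis using Lim_bounded[OF lim] by blast
qed

lemma conc_aux:
  fixes A B r r1 :: real
  assumes "0 \<le> A" "0 \<le> B" "0 < A + B" "1 < r1" "r1 \<le> r"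
  shows "(r - r1) * ln (A + B) + (r1 - 1) * ln (A + B * r) \<le> (r - 1) * ln (A + B * r1)"
proof -
  define u where "u = (r - r1) / (r - 1)"
  define v where "v = (r1 - 1) / (r - 1)"
  have r1: "r - 1 > 0" using assms by linarith
  have uv: "u \<ge> 0" "v \<ge> 0" "u + v = 1"
    using assms r1 unfolding u_def v_def by (auto intro!: divide_nonneg_nonneg simp: diff_divide_distrib[symmetric] add_divide_distrib[symmetric])
  have x: "A + B > 0" using assms by simp
  have "B * r \<ge> B * 1" using assms by (intro mult_left_mono) auto
  hence y: "A + B * r > 0" using assms by linarith
  have comb: "u *\<^sub>R (A + B) + v *\<^sub>R (A + B * r) = A + B * r1"
  proof -
    have "u *\<^sub>R (A + B) + v *\<^sub>R (A + B * r) = (u + v) * A + B * (u + v * r)" by (simp add: algebra_simps)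
    also have "u + v * r = r1"
    proof -
      have a1: "u * (r - 1) = r - r1" unfolding u_def using r1 by simp
      have a2: "v * (r - 1) = r1 - 1" unfolding v_def using r1 by simp
      have "(u + v * r) * (r - 1) = u * (r - 1) + v * (r - 1) * r" by (simp add: algebra_simps)
      also have "\<dots> = r1 * (r - 1)" unfolding a1 a2 by (simp add: algebra_simps)
      finally show ?thesis using r1 by simp
    qed
    finally show ?thesis using uv by simp
  qed
  have "u * ln (A + B) + v * ln (A + B * r) \<le> ln (u *\<^sub>R (A + B) + v *\<^sub>R (A + B * r))"
    using ln_concave[unfolded concave_on_iff] x y uv by auto
  hence "u * ln (A + B) + v * ln (A + B * r) \<le> ln (A + B * r1)" using comb by simp
  hence "(r - 1) * (u * ln (A + B) + v * ln (A + B * r)) \<le> (r - 1) * ln (A + B * r1)"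
    using r1 by (intro mult_left_mono) auto
  moreover have "(r - 1) * (u * ln (A + B) + v * ln (A + B * r)) = (r - r1) * ln (A + B) + (r1 - 1) * ln (A + B * r)"
  proof -
    have a1: "(r - 1) * u = r - r1" unfolding u_def using r1 by simp
    have a2: "(r - 1) * v = r1 - 1" unfolding v_def using r1 by simp
    show ?thesis by (simp add: distrib_left a1 a2 flip: mult.assoc)
  qed
  ultimately show ?thesis by simp
qed

lemma lp_real_norm:
  fixes \<beta> :: "nat \<Rightarrow> real"
  assumes "\<forall>j. \<beta> j \<ge> 0" "summable \<beta>"
    and g: "\<forall>z. g z = C * z ^ l * exp (complex_of_real \<alpha> * z) * (\<Prod>j. 1 + complex_of_real (\<beta> j) * z)"
    and s: "s \<ge> 0"
  shows "cmod (g (complex_of_real s)) = cmod C * s ^ l * exp (\<alpha> * s) * (\<Prod>j. 1 + \<beta> j * s)"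
proof -
  have P: "(\<Prod>j. 1 + \<beta> j * s) \<ge> 1" by (rule lp_prod_real(2)[OF assms(1,2) s])
  have e: "exp (complex_of_real \<alpha> * complex_of_real s) = complex_of_real (exp (\<alpha> * s))"
    by (metis exp_of_real of_real_mult)
  have "g (complex_of_real s) = C * (complex_of_real s) ^ l * complex_of_real (exp (\<alpha> * s)) * complex_of_real (\<Prod>j. 1 + \<beta> j * s)"
    using g lp_prod_of_real[OF assms(1,2) s] e by simp
  also have "\<dots> = C * complex_of_real (s ^ l * exp (\<alpha> * s) * (\<Prod>j. 1 + \<beta> j * s))"
    by (simp only: of_real_mult of_real_power mult.assoc)
  finally show ?thesis using P s by (simp add: norm_mult abs_mult norm_power)
qed

lemma lp_bound:
  assumes "g \<in> Lplus"
  shows "cmod (g z) \<le> cmod (g (complex_of_real (cmod z)))"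
proof -
  obtain C l \<alpha> \<beta> where a: "\<alpha> \<ge> 0" "\<forall>j. \<beta> j \<ge> 0" "summable \<beta>"
    and g: "\<forall>z. g z = C * z ^ l * exp (complex_of_real \<alpha> * z) * (\<Prod>j. 1 + complex_of_real (\<beta> j) * z)"
    using assms unfolding Lplus_def by blast
  have "cmod (g z) = cmod C * cmod z ^ l * exp (\<alpha> * Re z) * cmod (\<Prod>j. 1 + complex_of_real (\<beta> j) * z)"
    using g by (simp add: norm_mult norm_power norm_exp_eq_Re)
  also have "\<dots> \<le> cmod C * cmod z ^ l * exp (\<alpha> * cmod z) * (\<Prod>j. 1 + \<beta> j * cmod z)"
  proof (intro mult_mono mult_left_mono)
    show "exp (\<alpha> * Re z) \<le> exp (\<alpha> * cmod z)"
      using a(1) complex_Re_le_cmod[of z] by (simp add: mult_left_mono)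
    show "cmod (\<Prod>j. 1 + complex_of_real (\<beta> j) * z) \<le> (\<Prod>j. 1 + \<beta> j * cmod z)"
      by (rule lp_prod_norm[OF a(2,3)])
  qed (use lp_prod_real(2)[OF a(2,3) norm_ge_zero[of z]] in auto)
  also have "\<dots> = cmod (g (complex_of_real (cmod z)))"
    by (rule lp_real_norm[OF a(2,3) g norm_ge_zero, symmetric])
  finally show ?thesis .
qed

lemma lp_nz:
  assumes "g \<in> Lplus" "g \<noteq> (\<lambda>z. 0)"
  shows "g 1 \<noteq> 0"
proof -
  obtain C l \<alpha> \<beta> where a: "\<alpha> \<ge> 0" "\<forall>j. \<beta> j \<ge> 0" "summable \<beta>"
    and g: "\<forall>z. g z = C * z ^ l * exp (complex_of_real \<alpha> * z) * (\<Prod>j. 1 + complex_of_real (\<beta> j) * z)"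
    using assms unfolding Lplus_def by blast
  have "C \<noteq> 0" using assms(2) g by auto
  moreover have "cmod (g (complex_of_real 1)) = cmod C * 1 ^ l * exp (\<alpha> * 1) * (\<Prod>j. 1 + \<beta> j * 1)"
    by (rule lp_real_norm[OF a(2,3) g]) simp
  moreover have "(\<Prod>j. 1 + \<beta> j * 1) \<ge> 1" by (rule lp_prod_real(2)[OF a(2,3)]) simp
  ultimately have "cmod (g 1) > 0" by simp
  thus ?thesis by auto
qed

lemma lp_pos_conc:
  assumes "g \<in> Lplus" "g 1 \<noteq> 0"
  shows "\<And>s. s > 0 \<Longrightarrow> cmod (g (complex_of_real s)) > 0"
    and "\<And>r1 r. 1 < r1 \<Longrightarrow> r1 \<le> r \<Longrightarrow> (r - r1) * ln (cmod (g 1)) + (r1 - 1) * ln (cmod (g (complex_of_real r)))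
            \<le> (r - 1) * ln (cmod (g (complex_of_real r1)))"
proof -
  obtain C l \<alpha> \<beta> where a: "\<alpha> \<ge> 0" "\<forall>j. \<beta> j \<ge> 0" "summable \<beta>"
    and g: "\<forall>z. g z = C * z ^ l * exp (complex_of_real \<alpha> * z) * (\<Prod>j. 1 + complex_of_real (\<beta> j) * z)"
    using assms unfolding Lplus_def by blast
  have C: "C \<noteq> 0" using assms(2) g by auto
  define L where "L s = ln (cmod C) + real l * ln s + \<alpha> * s + (\<Sum>j. ln (1 + \<beta> j * s))" for s
  have Lok: "ln (cmod (g (complex_of_real s))) = L s" "cmod (g (complex_of_real s)) > 0" if s: "s > 0" for s
  proof -
    have cp: "convergent_prod (\<lambda>j. 1 + \<beta> j * s)" by (rule lp_prod_real(1)[OF a(2,3)]) (use s in simp)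
    have P: "(\<Prod>j. 1 + \<beta> j * s) \<ge> 1" by (rule lp_prod_real(2)[OF a(2,3)]) (use s in simp)
    have fpos: "\<And>j. 1 + \<beta> j * s > 0" using a(2) s by (simp add: add_pos_nonneg)
    have n: "cmod (g (complex_of_real s)) = cmod C * s ^ l * exp (\<alpha> * s) * (\<Prod>j. 1 + \<beta> j * s)"
      by (rule lp_real_norm[OF a(2,3) g]) (use s in simp)
    show "cmod (g (complex_of_real s)) > 0" unfolding n using C s P by simp
    have "ln (cmod (g (complex_of_real s))) = ln (cmod C) + ln (s ^ l) + ln (exp (\<alpha> * s)) + ln (\<Prod>j. 1 + \<beta> j * s)"
      unfolding n using C s P by (simp add: ln_mult)
    also have "\<dots> = L s" unfolding L_def using s by (simp add: ln_realpow suminf_ln_real[OF cp fpos])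
    finally show "ln (cmod (g (complex_of_real s))) = L s" .
  qed
  show "\<And>s. s > 0 \<Longrightarrow> cmod (g (complex_of_real s)) > 0" using Lok(2) by blast
  fix r1 r :: real
  assume r: "1 < r1" "r1 \<le> r"
  have sm: "summable (\<lambda>j. ln (1 + \<beta> j * s))" if "s > 0" for s
    by (rule summable_ln_real[OF lp_prod_real(1)[OF a(2,3)]]) (use a(2) that in \<open>simp_all add: add_pos_nonneg\<close>)
  have sm1: "summable (\<lambda>j. ln (1 + \<beta> j * 1))" using sm[of 1] by simp
  have smr: "summable (\<lambda>j. ln (1 + \<beta> j * r))" using sm[of r] r by simp
  have smr1: "summable (\<lambda>j. ln (1 + \<beta> j * r1))" using sm[of r1] r by simp
  have c1: "(r - r1) * ln 1 + (r1 - 1) * ln r \<le> (r - 1) * ln r1"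
    using conc_aux[of 0 1 r1 r] r by simp
  have c2: "(r - r1) * ln (1 + \<beta> j * 1) + (r1 - 1) * ln (1 + \<beta> j * r) \<le> (r - 1) * ln (1 + \<beta> j * r1)" for j
    using conc_aux[of 1 "\<beta> j" r1 r] r a(2)[rule_format, of j] by simp
  have s1: "(r - r1) * (\<Sum>j. ln (1 + \<beta> j * 1)) + (r1 - 1) * (\<Sum>j. ln (1 + \<beta> j * r))
      = (\<Sum>j. (r - r1) * ln (1 + \<beta> j * 1) + (r1 - 1) * ln (1 + \<beta> j * r))"
  proof -
    have A: "summable (\<lambda>j. (r - r1) * ln (1 + \<beta> j * 1))" using sm1 by (rule summable_mult)
    have B: "summable (\<lambda>j. (r1 - 1) * ln (1 + \<beta> j * r))" using smr by (rule summable_mult)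
    show ?thesis
      unfolding suminf_add[OF A B, symmetric] suminf_mult[OF sm1] suminf_mult[OF smr] by simp
  qed
  have s2: "(\<Sum>j. (r - r1) * ln (1 + \<beta> j * 1) + (r1 - 1) * ln (1 + \<beta> j * r)) \<le> (\<Sum>j. (r - 1) * ln (1 + \<beta> j * r1))"
    by (rule suminf_le) (use c2 sm1 smr smr1 in \<open>auto intro!: summable_add summable_mult\<close>)
  have s3: "(\<Sum>j. (r - 1) * ln (1 + \<beta> j * r1)) = (r - 1) * (\<Sum>j. ln (1 + \<beta> j * r1))"
    using smr1 by (rule suminf_mult)
  have lin: "(r - r1) * (\<alpha> * 1) + (r1 - 1) * (\<alpha> * r) = (r - 1) * (\<alpha> * r1)" by (simp add: algebra_simps)
  define X where "X s = (\<Sum>j. ln (1 + \<beta> j * s))" for s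
  have Xf: "(r - r1) * X 1 + (r1 - 1) * X r \<le> (r - 1) * X r1"
    unfolding X_def using s1 s2 s3 by linarith
  have c1': "real l * ((r - r1) * ln 1 + (r1 - 1) * ln r) \<le> real l * ((r - 1) * ln r1)"
    using c1 by (intro mult_left_mono) auto
  have LX: "L s = ln (cmod C) + real l * ln s + \<alpha> * s + X s" for s unfolding L_def X_def by simp
  have "(r - r1) * L 1 + (r1 - 1) * L r \<le> (r - 1) * L r1"
    using c1' Xf lin unfolding LX by (simp add: algebra_simps)
  thus "(r - r1) * ln (cmod (g 1)) + (r1 - 1) * ln (cmod (g (complex_of_real r))) \<le> (r - 1) * ln (cmod (g (complex_of_real r1)))"
    using Lok(1)[of 1] Lok(1)[of r] Lok(1)[of r1] r by simp
qed

lemma e_le_pow: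
  assumes "k \<ge> (1::nat)"
  shows "exp 1 \<le> ((real k + 1) / real k) ^ (k + 1)"
proof -
  define x where "x = (real k + 1) / real k"
  have k: "real k > 0" using assms by simp
  have x: "x > 0" unfolding x_def using k by simp
  have "ln (real k / (real k + 1)) \<le> real k / (real k + 1) - 1" by (rule ln_le_minus_one) (use k in simp)
  also have "\<dots> = - 1 / (real k + 1)" using k by (simp add: field_simps)
  finally have "ln (real k / (real k + 1)) \<le> - 1 / (real k + 1)" .
  moreover have "ln (real k / (real k + 1)) = - ln x" unfolding x_def using k by (simp add: ln_div)
  ultimately have "1 / (real k + 1) \<le> ln x" by simp
  hence "1 \<le> (real k + 1) * ln x" using k by (simp add: field_simps)
  hence "exp 1 \<le> exp ((real k + 1) * ln x)" by simp
  also have "(real k + 1) * ln x = ln (x ^ (k + 1))" by (subst ln_realpow) simp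
  also have "exp (ln (x ^ (k + 1))) = x ^ (k + 1)" using x by simp
  finally show ?thesis unfolding x_def .
qed

lemma fact_le_stirling:
  assumes "k \<ge> (1::nat)"
  shows "fact k \<le> real k ^ (k + 1) * exp (1 - real k)"
  using assms
proof (induct k rule: dec_induct)
  case base
  then show ?case by simp
next
  case (step k)
  have k: "real k > 0" using step by simp
  have "real k ^ (k + 1) * exp 1 \<le> real k ^ (k + 1) * ((real k + 1) / real k) ^ (k + 1)"
    using e_le_pow[OF step(1)] k by (intro mult_left_mono) auto
  also have "\<dots> = (real k + 1) ^ (k + 1)"
    using k by (simp add: power_divide)
  finally have A: "real k ^ (k + 1) * exp 1 \<le> (real k + 1) ^ (k + 1)" .
  have "fact (Suc k) = (real k + 1) * fact k" by simp
  also have "\<dots> \<le> (real k + 1) * (real k ^ (k + 1) * exp (1 - real k))"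
    using step(3) k by (intro mult_left_mono) auto
  also have "\<dots> = (real k + 1) * (real k ^ (k + 1) * exp 1) * exp (- real k)"
    by (simp add: exp_diff exp_minus field_simps)
  also have "\<dots> \<le> (real k + 1) * (real k + 1) ^ (k + 1) * exp (- real k)"
    using A k by (intro mult_right_mono mult_left_mono) auto
  also have "\<dots> = real (Suc k) ^ (Suc k + 1) * exp (1 - real (Suc k))"
    by (simp add: add.commute)
  finally show ?case .
qed

lemma fact_cauchy_bound:
  assumes "k \<ge> (1::nat)" "c > 0"
  shows "fact k * exp (real k) / (real k / c) ^ k \<le> exp 1 * real k * c ^ k"
proof -
  have k: "real k > 0" using assms by simp
  have "fact k * exp (real k) / (real k / c) ^ k = fact k * exp (real k) * c ^ k / real k ^ k"
    by (simp add: power_divide)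
  also have "\<dots> \<le> real k ^ (k + 1) * exp (1 - real k) * exp (real k) * c ^ k / real k ^ k"
    using fact_le_stirling[OF assms(1)] assms k
    by (intro divide_right_mono mult_right_mono) auto
  also have "\<dots> = exp 1 * real k * c ^ k"
    using k by (simp add: exp_diff field_simps)
  finally show ?thesis .
qed

lemma taylor_growth:
  assumes hol: "f holomorphic_on UNIV" and c: "c \<ge> 0"
    and d: "\<And>k. cmod ((deriv ^^ k) f 0) \<le> N * c ^ k"
  shows "cmod (f z) \<le> N * exp (c * cmod z)"
proof -
  have "cmod (f 0) \<le> N" using d[of 0] by simp
  hence N: "N \<ge> 0" using norm_ge_zero[of "f 0"] by linarith
  have s: "(\<lambda>n. (deriv ^^ n) f 0 / fact n * (z - 0) ^ n) sums f z"
    by (rule holomorphic_power_series[of f 0 "cmod z + 1"]) (use hol in \<open>auto intro: holomorphic_on_subset\<close>)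
  have e: "(\<lambda>n. N * ((c * cmod z) ^ n /\<^sub>R fact n)) sums (N * exp (c * cmod z))"
    by (rule sums_mult[OF exp_converges])
  have "cmod (f z) = cmod (\<Sum>n. (deriv ^^ n) f 0 / fact n * (z - 0) ^ n)" using sums_unique[OF s] by simp
  also have "\<dots> \<le> (\<Sum>n. N * ((c * cmod z) ^ n /\<^sub>R fact n))"
  proof (rule norm_suminf_le)
    fix n
    have "cmod ((deriv ^^ n) f 0 / fact n * (z - 0) ^ n) = cmod ((deriv ^^ n) f 0) * cmod z ^ n / fact n"
      by (simp add: norm_mult norm_divide norm_power)
    also have "\<dots> \<le> N * c ^ n * cmod z ^ n / fact n"
      using d[of n] by (intro divide_right_mono mult_right_mono) auto
    also have "\<dots> = N * ((c * cmod z) ^ n /\<^sub>R fact n)" by (simp add: power_mult_distrib divide_inverse)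
    finally show "cmod ((deriv ^^ n) f 0 / fact n * (z - 0) ^ n) \<le> N * ((c * cmod z) ^ n /\<^sub>R fact n)" .
  qed (use e in \<open>simp add: sums_iff\<close>)
  also have "\<dots> = N * exp (c * cmod z)" using sums_unique[OF e] by simp
  finally show ?thesis .
qed

lemma normb_bound:
  assumes "normb b f < \<infinity>" "b > 0"
  obtains N where "N > 0" "\<And>k. cmod ((deriv ^^ k) f 0) \<le> N * b ^ k"
proof -
  have le: "ereal (cmod ((deriv ^^ k) f 0) / b ^ k) \<le> normb b f" for k
    unfolding normb_def by (rule SUP_upper) simp
  obtain M where M: "normb b f = ereal M"
  proof (cases "normb b f")
    case (real r) then show ?thesis using that by blast
  next
    case PInf then show ?thesis using assms by simp
  next
    case MInf then show ?thesis using le[of 0] by simp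
  qed
  define N where "N = max M 1"
  have "cmod ((deriv ^^ k) f 0) \<le> N * b ^ k" for k
  proof -
    have "cmod ((deriv ^^ k) f 0) / b ^ k \<le> M" using le[of k] M by simp
    hence "cmod ((deriv ^^ k) f 0) / b ^ k \<le> N" unfolding N_def by simp
    thus ?thesis using assms(2) by (simp add: divide_le_eq)
  qed
  moreover have "N > 0" unfolding N_def by simp
  ultimately show ?thesis using that by blast
qed

lemma ln_step:
  fixes x y w b2 r r1 :: real
  assumes A: "(r - r1) * x + (r1 - 1) * y \<le> (r - 1) * w" and B: "w - x \<le> b2 * (r1 - 1)"
    and r: "1 < r1" "r1 \<le> r"
  shows "y \<le> w + b2 * (r - r1)"
proof -
  have "(r - r1) * (w - x) \<le> (r - r1) * (b2 * (r1 - 1))" using B r by (intro mult_left_mono) auto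
  hence "(r1 - 1) * y \<le> (r1 - 1) * (w + b2 * (r - r1))" using A by (simp add: algebra_simps)
  thus ?thesis using r by simp
qed

lemma growth_near:
  assumes hL: "h \<in> Lplus" and close: "\<forall>z\<in>cball 0 r1. cmod (h z - g0 z) < \<eta>"
    and r1: "r1 \<ge> 2" and b2: "b2 \<ge> 0" and b1': "b1 \<ge> 0"
    and Nb: "\<forall>z. cmod (g0 z) \<le> N * exp (b1 * cmod z)"
    and \<eta>0: "\<eta> > 0" and p0: "\<eta> \<le> cmod (g0 1) / 2" and \<eta>1: "\<eta> \<le> 1"
    and \<eta>Q: "\<eta> * (1 + exp (b2 * (r1 - 1))) \<le> exp (b2 * (r1 - 1)) * cmod (g0 1) - cmod (g0 (complex_of_real r1))"
  shows "cmod (h z) \<le> (N * exp (b1 * r1) + 1) * exp (b2 * cmod z)"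
proof -
  define Q where "Q = exp (b2 * (r1 - 1))"
  define K where "K = N * exp (b1 * r1) + 1"
  have Q: "Q > 0" unfolding Q_def by simp
  have "cmod (g0 0) \<le> N" using Nb[rule_format, of 0] by simp
  hence N0: "N \<ge> 0" using norm_ge_zero[of "g0 0"] by linarith
  have near: "cmod (h z) \<le> cmod (g0 z) + \<eta>" if "cmod z \<le> r1" for z
  proof -
    have "cmod (h z - g0 z) < \<eta>" using close that by auto
    thus ?thesis using norm_triangle_ineq2[of "h z" "g0 z"] by linarith
  qed
  have near': "cmod (g0 z) - \<eta> \<le> cmod (h z)" if "cmod z \<le> r1" for z
  proof -
    have "cmod (h z - g0 z) < \<eta>" using close that by auto
    thus ?thesis using norm_triangle_ineq3[of "h z" "g0 z"] by (simp add: norm_minus_commute)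
  qed
  have h1: "cmod (h 1) \<ge> cmod (g0 1) - \<eta>" using near'[of 1] r1 by simp
  have h1pos: "cmod (h 1) > 0" using h1 p0 \<eta>0 by linarith
  hence h1nz: "h 1 \<noteq> 0" by auto
  have hr1: "cmod (h (complex_of_real r1)) \<le> cmod (g0 (complex_of_real r1)) + \<eta>"
    using near[of "complex_of_real r1"] r1 by simp
  have g0r1: "cmod (g0 (complex_of_real r1)) \<le> N * exp (b1 * r1)"
    using Nb[rule_format, of "complex_of_real r1"] r1 by simp
  have hr1K: "cmod (h (complex_of_real r1)) \<le> K" unfolding K_def using hr1 g0r1 \<eta>1 by linarith
  have ratio: "cmod (h (complex_of_real r1)) \<le> Q * cmod (h 1)"
  proof -
    have "cmod (h (complex_of_real r1)) \<le> cmod (g0 (complex_of_real r1)) + \<eta>" by (rule hr1)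
    also have "\<dots> \<le> Q * (cmod (g0 1) - \<eta>)" using \<eta>Q unfolding Q_def by (simp add: algebra_simps)
    also have "\<dots> \<le> Q * cmod (h 1)" using h1 Q by (intro mult_left_mono) auto
    finally show ?thesis .
  qed
  show ?thesis
  proof (cases "cmod z \<le> r1")
    case True
    have "cmod (h z) \<le> N * exp (b1 * cmod z) + 1" using near[OF True] Nb \<eta>1 by (smt (verit))
    also have "\<dots> \<le> K"
    proof -
      have "N \<ge> 0" by (rule N0)
      moreover have "exp (b1 * cmod z) \<le> exp (b1 * r1)" using True b1' by (simp add: mult_left_mono)
      ultimately show ?thesis unfolding K_def by (simp add: mult_left_mono)
    qed
    also have "\<dots> \<le> K * exp (b2 * cmod z)"
    proof -
      have "K \<ge> 0" unfolding K_def using N0 by (simp add: add_nonneg_nonneg)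
      moreover have "exp (b2 * cmod z) \<ge> 1" using b2 by simp
      ultimately show ?thesis by (metis mult_left_mono mult.right_neutral)
    qed
    finally show ?thesis unfolding K_def .
  next
    case False
    define r where "r = cmod z"
    have r: "1 < r1" "r1 \<le> r" using False r1 unfolding r_def by auto
    have hb: "cmod (h z) \<le> cmod (h (complex_of_real r))" unfolding r_def by (rule lp_bound[OF hL])
    have pr: "cmod (h (complex_of_real r)) > 0" "cmod (h (complex_of_real r1)) > 0"
      using lp_pos_conc(1)[OF hL h1nz] r by auto
    have A: "(r - r1) * ln (cmod (h 1)) + (r1 - 1) * ln (cmod (h (complex_of_real r))) \<le> (r - 1) * ln (cmod (h (complex_of_real r1)))"
      by (rule lp_pos_conc(2)[OF hL h1nz r])
    have B: "ln (cmod (h (complex_of_real r1))) - ln (cmod (h 1)) \<le> b2 * (r1 - 1)"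
    proof -
      have "ln (cmod (h (complex_of_real r1))) \<le> ln (Q * cmod (h 1))" using ratio pr h1pos Q by (subst ln_le_cancel_iff) auto
      also have "\<dots> = b2 * (r1 - 1) + ln (cmod (h 1))" unfolding Q_def using h1pos by (simp add: ln_mult)
      finally show ?thesis by simp
    qed
    have "ln (cmod (h (complex_of_real r))) \<le> ln (cmod (h (complex_of_real r1))) + b2 * (r - r1)"
      by (rule ln_step[OF A B r])
    hence "cmod (h (complex_of_real r)) \<le> exp (ln (cmod (h (complex_of_real r1))) + b2 * (r - r1))"
      using pr by (metis exp_le_cancel_iff exp_ln)
    also have "\<dots> = cmod (h (complex_of_real r1)) * exp (b2 * (r - r1))" using pr by (simp add: exp_add)
    also have "\<dots> \<le> K * exp (b2 * r)"
    proof (rule mult_mono)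
      show "exp (b2 * (r - r1)) \<le> exp (b2 * r)" using b2 r by (simp add: algebra_simps)
    qed (use hr1K N0 in \<open>auto simp: K_def add_nonneg_nonneg\<close>)
    finally show ?thesis using hb unfolding K_def r_def by simp
  qed
qed

lemma main_local:
  assumes a: "a \<ge> 0" and g0L: "g0 \<in> Lplus" and g0A: "g0 \<in> A_space a" and g0nz: "g0 \<noteq> (\<lambda>z. 0)"
    and b: "b > a" and \<epsilon>: "\<epsilon> > 0"
  shows "\<exists>R \<eta>. \<eta> > 0 \<and> (\<forall>g. g \<in> Lplus \<longrightarrow> g holomorphic_on UNIV \<longrightarrow> (\<forall>z\<in>cball 0 R. cmod (g z - g0 z) < \<eta>) \<longrightarrow>
            (\<forall>k. cmod ((deriv ^^ k) g 0 - (deriv ^^ k) g0 0) / b ^ k \<le> \<epsilon>))"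
proof -
  define b1 where "b1 = a + (b - a) / 3"
  define b2 where "b2 = a + 2 * (b - a) / 3"
  have bs: "0 < b1" "b1 < b2" "b2 < b" "0 < b2" "0 < b" using a b unfolding b1_def b2_def by (auto simp: field_simps)
  have hol0: "g0 holomorphic_on UNIV" using g0A unfolding A_space_def by simp
  have "normb b1 g0 < \<infinity>" using g0A bs b unfolding A_space_def b1_def by auto
  then obtain N where N: "N > 0" "\<And>k. cmod ((deriv ^^ k) g0 0) \<le> N * b1 ^ k"
    using normb_bound bs by blast
  have Nb: "\<forall>z. cmod (g0 z) \<le> N * exp (b1 * cmod z)"
    using taylor_growth[OF hol0, of b1 N] N bs by auto
  define p0 where "p0 = cmod (g0 1)"
  have p0: "p0 > 0" unfolding p0_def using lp_nz[OF g0L g0nz] by simp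
  define r1 where "r1 = max 2 ((ln N - ln p0 + b2) / (b2 - b1) + 1)"
  define Q where "Q = exp (b2 * (r1 - 1))"
  have r1: "r1 \<ge> 2" unfolding r1_def by simp
  have Q: "Q > 0" unfolding Q_def by simp
  have key: "cmod (g0 (complex_of_real r1)) < Q * p0"
  proof -
    have "(ln N - ln p0 + b2) / (b2 - b1) < r1" unfolding r1_def by linarith
    hence "ln N - ln p0 + b2 < (b2 - b1) * r1" using bs by (simp add: divide_less_eq mult.commute)
    hence lt: "ln N + b1 * r1 < b2 * (r1 - 1) + ln p0" by (simp add: algebra_simps)
    have "cmod (g0 (complex_of_real r1)) \<le> N * exp (b1 * r1)" using Nb[rule_format, of "complex_of_real r1"] r1 by simp
    also have "\<dots> = exp (ln N + b1 * r1)" using N by (simp add: exp_add)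
    also have "\<dots> < exp (b2 * (r1 - 1) + ln p0)" using lt by simp
    also have "\<dots> = Q * p0" unfolding Q_def using p0 by (simp add: exp_add)
    finally show ?thesis .
  qed
  define K where "K = N * exp (b1 * r1) + 1"
  have K: "K > 0" unfolding K_def using N by (simp add: add_pos_nonneg)
  define q where "q = b2 / b"
  have q: "0 < q" "q < 1" unfolding q_def using bs by auto
  have "(\<lambda>n. (2 * K * exp 1) * (of_nat n * q ^ n)) \<longlonglongrightarrow> (2 * K * exp 1) * 0"
    by (intro tendsto_mult tendsto_const powser_times_n_limit_0) (use q in simp)
  hence "eventually (\<lambda>n. (2 * K * exp 1) * (of_nat n * q ^ n) < \<epsilon>) sequentially"
    using \<epsilon> by (intro order_tendstoD(2)) auto
  then obtain K1 where K1: "\<And>n. n \<ge> K1 \<Longrightarrow> (2 * K * exp 1) * (of_nat n * q ^ n) < \<epsilon>"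
    unfolding eventually_sequentially by blast
  define K0 where "K0 = max K1 1"
  define S where "S = (\<Sum>k<K0. fact k / b ^ k)"
  have S: "S \<ge> 0" unfolding S_def using bs by (intro sum_nonneg) auto
  define \<eta> where "\<eta> = min (\<epsilon> / (S + 1)) (min 1 (min ((Q * p0 - cmod (g0 (complex_of_real r1))) / (1 + Q)) (p0 / 2)))"
  have \<eta>: "\<eta> > 0" unfolding \<eta>_def using \<epsilon> S key Q p0 by auto
  have \<eta>1: "\<eta> \<le> 1" "\<eta> \<le> p0 / 2" "\<eta> \<le> \<epsilon> / (S + 1)" unfolding \<eta>_def
    by (meson min.cobounded1 min.cobounded2 order.trans)+
  have \<eta>Q: "\<eta> * (1 + Q) \<le> Q * p0 - cmod (g0 (complex_of_real r1))"
  proof -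
    have "\<eta> \<le> (Q * p0 - cmod (g0 (complex_of_real r1))) / (1 + Q)" unfolding \<eta>_def
      by (meson min.cobounded1 min.cobounded2 order.trans)
    thus ?thesis using Q by (simp add: le_divide_eq)
  qed
  have growth: "cmod (h z) \<le> K * exp (b2 * cmod z)"
    if "h \<in> Lplus" "\<forall>z\<in>cball 0 r1. cmod (h z - g0 z) < \<eta>" for h z
    unfolding K_def
    by (rule growth_near[OF that r1 _ _ Nb \<eta>]) (use bs \<eta>1 \<eta>Q in \<open>auto simp: Q_def p0_def\<close>)
  show ?thesis
  proof (intro exI conjI allI impI)
    show "\<eta> > 0" by (rule \<eta>)
    fix g k
    assume gL: "g \<in> Lplus" and hol: "g holomorphic_on UNIV" and cl: "\<forall>z\<in>cball 0 r1. cmod (g z - g0 z) < \<eta>"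
    define d where "d = (\<lambda>z. g z - g0 z)"
    have hold: "d holomorphic_on UNIV" unfolding d_def using hol hol0 by (intro holomorphic_intros) auto
    have contd: "continuous_on A d" for A using holomorphic_on_imp_continuous_on[OF hold] continuous_on_subset by blast
    have dk: "(deriv ^^ k) d 0 = (deriv ^^ k) g 0 - (deriv ^^ k) g0 0"
      unfolding d_def by (rule higher_deriv_diff[OF hol hol0]) auto
    have dgrowth: "cmod (d z) \<le> 2 * K * exp (b2 * cmod z)" for z
    proof -
      have "cmod (g z) \<le> K * exp (b2 * cmod z)" by (rule growth[OF gL cl])
      moreover have "cmod (g0 z) \<le> K * exp (b2 * cmod z)" by (rule growth[OF g0L]) (use \<eta> in simp)
      ultimately show ?thesis unfolding d_def using norm_triangle_ineq4[of "g z" "g0 z"] by linarith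
    qed
    show "cmod ((deriv ^^ k) g 0 - (deriv ^^ k) g0 0) / b ^ k \<le> \<epsilon>"
    proof (cases "k < K0")
      case True
      have "cmod ((deriv ^^ k) d 0) \<le> fact k * \<eta> / 1 ^ k"
      proof (rule Cauchy_inequality)
        show "d holomorphic_on ball 0 1" using hold by (rule holomorphic_on_subset) auto
        show "continuous_on (cball 0 1) d" by (rule contd)
        fix x :: complex assume "cmod (0 - x) = 1"
        hence "x \<in> cball 0 r1" using r1 by auto
        thus "cmod (d x) \<le> \<eta>" using cl unfolding d_def by (auto intro: less_imp_le)
      qed simp
      hence A: "cmod ((deriv ^^ k) d 0) / b ^ k \<le> (fact k / b ^ k) * \<eta>" using bs by (simp add: divide_right_mono)
      have "fact k / b ^ k \<le> S" unfolding S_def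
        by (rule member_le_sum) (use True bs in auto)
      hence "(fact k / b ^ k) * \<eta> \<le> S * (\<epsilon> / (S + 1))" using \<eta> \<eta>1 S by (intro mult_mono) auto
      also have "\<dots> \<le> \<epsilon>" using S \<epsilon> by (simp add: field_simps)
      finally show ?thesis using A dk by simp
    next
      case False
      hence k: "k \<ge> K1" "k \<ge> 1" unfolding K0_def by auto
      define \<rho> where "\<rho> = real k / b2"
      have \<rho>: "\<rho> > 0" unfolding \<rho>_def using k bs by simp
      have "cmod ((deriv ^^ k) d 0) \<le> fact k * (2 * K * exp (b2 * \<rho>)) / \<rho> ^ k"
      proof (rule Cauchy_inequality)
        show "d holomorphic_on ball 0 \<rho>" using hold by (rule holomorphic_on_subset) auto
        show "continuous_on (cball 0 \<rho>) d" by (rule contd)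
        fix x :: complex assume "cmod (0 - x) = \<rho>"
        thus "cmod (d x) \<le> 2 * K * exp (b2 * \<rho>)" using dgrowth[of x] by simp
      qed (rule \<rho>)
      also have "\<dots> = 2 * K * (fact k * exp (real k) / (real k / b2) ^ k)"
        unfolding \<rho>_def using bs by simp
      also have "\<dots> \<le> 2 * K * (exp 1 * real k * b2 ^ k)"
        using fact_cauchy_bound[OF k(2) bs(4)] K by (intro mult_left_mono) auto
      finally have B: "cmod ((deriv ^^ k) d 0) \<le> 2 * K * (exp 1 * real k * b2 ^ k)" .
      have "cmod ((deriv ^^ k) d 0) / b ^ k \<le> 2 * K * (exp 1 * real k * b2 ^ k) / b ^ k"
        using B bs by (simp add: divide_right_mono)
      also have "\<dots> = (2 * K * exp 1) * (of_nat k * q ^ k)"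
        unfolding q_def by (simp add: power_divide)
      also have "\<dots> \<le> \<epsilon>" using K1[OF k(1)] by simp
      finally show ?thesis using dk by simp
    qed
  qed
qed

lemma normb_finite:
  assumes "normb b f < ereal r"
  obtains d where "normb b f = ereal d" "d < r" "\<And>k. cmod ((deriv ^^ k) f 0) / b ^ k \<le> d"
proof -
  have le: "ereal (cmod ((deriv ^^ k) f 0) / b ^ k) \<le> normb b f" for k
    unfolding normb_def by (rule SUP_upper) simp
  show ?thesis
  proof (cases "normb b f")
    case (real d)
    then show ?thesis using that le assms by auto
  next
    case PInf then show ?thesis using assms by simp
  next
    case MInf then show ?thesis using le[of 0] by simp
  qed
qed

lemma basis_open:
  assumes a: "a \<ge> 0" and BL: "B \<subseteq> Lplus_a a" and nz: "(\<lambda>z. 0) \<notin> B"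
    and U: "U \<in> {{g \<in> A_space a. normb b (\<lambda>z. g z - f z) < ereal r} | f b r. f \<in> A_space a \<and> b > a \<and> r > 0}"
  shows "openin (subtopology LU_topology B) (B \<inter> U)"
proof -
  obtain f b r where U: "U = {g \<in> A_space a. normb b (\<lambda>z. g z - f z) < ereal r}" and f: "f \<in> A_space a" and b: "b > a" and r: "r > 0"
    using U by blast
  have holf: "f holomorphic_on UNIV" using f unfolding A_space_def by simp
  have bpos: "b > 0" using a b by simp
  show ?thesis
  proof (subst openin_subopen, intro ballI)
    fix g0 assume g0: "g0 \<in> B \<inter> U"
    have g0L: "g0 \<in> Lplus" and g0A: "g0 \<in> A_space a" using g0 BL unfolding Lplus_a_def by auto
    have hol0: "g0 holomorphic_on UNIV" using g0A unfolding A_space_def by simp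
    have g0nz: "g0 \<noteq> (\<lambda>z. 0)" using g0 nz by auto
    have "normb b (\<lambda>z. g0 z - f z) < ereal r" using g0 U by simp
    then obtain d where d: "d < r" "\<And>k. cmod ((deriv ^^ k) (\<lambda>z. g0 z - f z) 0) / b ^ k \<le> d"
      using normb_finite by metis
    define \<epsilon> where "\<epsilon> = (r - d) / 2"
    have \<epsilon>: "\<epsilon> > 0" unfolding \<epsilon>_def using d by simp
    obtain R \<eta> where \<eta>: "\<eta> > 0" and main: "\<And>g. g \<in> Lplus \<Longrightarrow> g holomorphic_on UNIV \<Longrightarrow> (\<forall>z\<in>cball 0 R. cmod (g z - g0 z) < \<eta>) \<Longrightarrow>
            (\<forall>k. cmod ((deriv ^^ k) g 0 - (deriv ^^ k) g0 0) / b ^ k \<le> \<epsilon>)"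
      using main_local[OF a g0L g0A g0nz b \<epsilon>] by blast
    define W where "W = {g. g holomorphic_on UNIV \<and> (\<forall>z\<in>cball 0 R. cmod (g z - g0 z) < \<eta>)}"
    have "openin LU_topology W" unfolding LU_topology_def
    proof (rule topology_generated_by_Basis, unfold mem_Collect_eq)
      show "\<exists>f K r. W = {g. g holomorphic_on UNIV \<and> (\<forall>z\<in>K. cmod (g z - f z) < r)} \<and>
          f holomorphic_on UNIV \<and> compact K \<and> 0 < r"
        by (rule exI[of _ g0], rule exI[of _ "cball 0 R"], rule exI[of _ \<eta>]) (use hol0 \<eta> in \<open>simp add: W_def\<close>)
    qed
    hence "openin (subtopology LU_topology B) (B \<inter> W)" by (rule openin_subtopology_Int2)
    moreover have "g0 \<in> B \<inter> W" using g0 hol0 \<eta> unfolding W_def by auto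
    moreover have "B \<inter> W \<subseteq> B \<inter> U"
    proof
      fix g assume g: "g \<in> B \<inter> W"
      have gL: "g \<in> Lplus" and gA: "g \<in> A_space a" using g BL unfolding Lplus_a_def by auto
      have hol: "g holomorphic_on UNIV" using gA unfolding A_space_def by simp
      have cl: "\<forall>z\<in>cball 0 R. cmod (g z - g0 z) < \<eta>" using g unfolding W_def by auto
      have m: "cmod ((deriv ^^ k) g 0 - (deriv ^^ k) g0 0) / b ^ k \<le> \<epsilon>" for k using main[OF gL hol cl] by blast
      have each: "cmod ((deriv ^^ k) (\<lambda>z. g z - f z) 0) / b ^ k \<le> \<epsilon> + d" for k
      proof -
        have e1: "(deriv ^^ k) (\<lambda>z. g z - f z) 0 = (deriv ^^ k) g 0 - (deriv ^^ k) f 0"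
          by (rule higher_deriv_diff[OF hol holf]) auto
        have e2: "(deriv ^^ k) (\<lambda>z. g0 z - f z) 0 = (deriv ^^ k) g0 0 - (deriv ^^ k) f 0"
          by (rule higher_deriv_diff[OF hol0 holf]) auto
        have "cmod ((deriv ^^ k) g 0 - (deriv ^^ k) f 0) \<le> cmod ((deriv ^^ k) g 0 - (deriv ^^ k) g0 0) + cmod ((deriv ^^ k) g0 0 - (deriv ^^ k) f 0)"
          using norm_triangle_ineq[of "(deriv ^^ k) g 0 - (deriv ^^ k) g0 0" "(deriv ^^ k) g0 0 - (deriv ^^ k) f 0"] by simp
        hence "cmod ((deriv ^^ k) g 0 - (deriv ^^ k) f 0) / b ^ k \<le> cmod ((deriv ^^ k) g 0 - (deriv ^^ k) g0 0) / b ^ k + cmod ((deriv ^^ k) g0 0 - (deriv ^^ k) f 0) / b ^ k"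
          using bpos by (simp add: divide_right_mono add_divide_distrib[symmetric])
        thus ?thesis using m[of k] d(2)[of k] unfolding e1 e2 by linarith
      qed
      have "normb b (\<lambda>z. g z - f z) \<le> ereal (\<epsilon> + d)"
        unfolding normb_def by (rule SUP_least) (use each in simp)
      also have "\<dots> < ereal r"
      proof -
        have "\<epsilon> + d < r" unfolding \<epsilon>_def using d(1) by (simp add: field_simps)
        thus ?thesis by simp
      qed
      finally show "g \<in> B \<inter> U" using g gA U by simp
    qed
    ultimately show "\<exists>T. openin (subtopology LU_topology B) T \<and> g0 \<in> T \<and> T \<subseteq> B \<inter> U" by blast
  qed
qed

theorem corollary1p4:
  fixes a :: real and B :: "(complex \<Rightarrow> complex) set"
  assumes "a \<ge> 0"
    and "B \<subseteq> Lplus_a a"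
    and "compactin LU_topology B"
    and "(\<lambda>z. 0) \<notin> B"
  shows "compactin (A_topology a) B"
proof -
  let ?S = "{{g \<in> A_space a. normb b (\<lambda>z. g z - f z) < ereal r} | f b r. f \<in> A_space a \<and> b > a \<and> r > 0}"
  have Btop: "B \<subseteq> topspace LU_topology" by (rule compactin_subset_topspace[OF assms(3)])
  have cpt: "compactin (subtopology LU_topology B) B" using assms(3) by (simp add: compactin_subtopology)
  have cont: "continuous_map (subtopology LU_topology B) (A_topology a) id"
    unfolding continuous_map
  proof (intro conjI allI impI)
    show "id ` topspace (subtopology LU_topology B) \<subseteq> topspace (A_topology a)"
    proof
      fix g assume "g \<in> id ` topspace (subtopology LU_topology B)"
      hence g: "g \<in> B" by auto
      hence gA: "g \<in> A_space a" using assms(2) unfolding Lplus_a_def by auto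
      have "normb (a + 1) (\<lambda>z. g z - g z) = 0" unfolding normb_def by (simp add: zero_ereal_def)
      hence m1: "g \<in> {h \<in> A_space a. normb (a + 1) (\<lambda>z. h z - g z) < ereal 1}" using gA by simp
      have m2: "{h \<in> A_space a. normb (a + 1) (\<lambda>z. h z - g z) < ereal 1} \<in> ?S"
        unfolding mem_Collect_eq
        by (rule exI[of _ g], rule exI[of _ "a + 1"], rule exI[of _ 1]) (use gA in simp)
      have "g \<in> \<Union>?S" by (rule UnionI[OF m2 m1])
      thus "g \<in> topspace (A_topology a)" unfolding A_topology_def by simp
    qed
  next
    fix U assume "openin (A_topology a) U"
    hence "generate_topology_on ?S U" unfolding A_topology_def by (rule openin_topology_generated_by)
    hence "openin (subtopology LU_topology B) (B \<inter> U)"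
    proof (induct rule: generate_topology_on.induct)
      case Empty then show ?case by simp
    next
      case (Int a b)
      have "B \<inter> (a \<inter> b) = (B \<inter> a) \<inter> (B \<inter> b)" by auto
      then show ?case using Int by (simp add: openin_Int)
    next
      case (UN K)
      have "B \<inter> \<Union>K = \<Union>((\<lambda>k. B \<inter> k) ` K)" by auto
      moreover have "openin (subtopology LU_topology B) (\<Union>((\<lambda>k. B \<inter> k) ` K))"
        by (rule openin_Union) (use UN in blast)
      ultimately show ?case by simp
    next
      case (Basis s)
      then show ?case by (rule basis_open[OF assms(1,2,4)])
    qed
    moreover have "{x \<in> topspace (subtopology LU_topology B). id x \<in> U} = B \<inter> U" using Btop by auto
    ultimately show "openin (subtopology LU_topology B) {x \<in> topspace (subtopology LU_topology B). id x \<in> U}" by simp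
  qed
  show ?thesis using image_compactin[OF cpt cont] by simp
qed

end
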